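(* Let $X$ be an indiscrete topological space. Then for any starting points $m,l\in X$, the lion has a strategy in $X$ for the starting points $m$ (man) and $l$ (lion).
   Context: For a topological space $X$ and $x\in X$, let $P_x(X)$ be the set of continuous maps $\gamma:[0,+\infty)\to X$ with $\gamma(0)=x$. For $\gamma\in P_x(X)$ and $t\ge 0$, write $\gamma_{<t}=\gamma|_{[0,t)}$ and $\gamma_{\le t}=\gamma|_{[0,t]}$. Given starting points $m$ (man) and $l$ (lion) in $X$, a strategy for the lion is a function $S:P_m(X)\to P_l(X)$ such that (i) for each $\alpha\in P_m(X)$ there exists $t\ge 0$ with $S(\alpha)(t)=\alpha(t)$; and (ii) (no-lookahead rule) whenever $\alpha,\alpha'\in P_m(X)$ and $t\ge0$ satisfy $\alpha_{<t}=\alpha'_{<t}$, then $S(\alpha)_{\le t}=S(\alpha')_{\le t}$. The Axiom of Choice is assumed. *)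

theory Defs
  imports "HOL-Analysis.Analysis"
begin

definition indiscrete_space :: "'a topology \<Rightarrow> bool" where
  "indiscrete_space X \<longleftrightarrow> (\<forall>U. openin X U \<longleftrightarrow> U = {} \<or> U = topspace X)"

definition paths_from :: "'a topology \<Rightarrow> 'a \<Rightarrow> (real \<Rightarrow> 'a) set" where
  "paths_from X x = {\<gamma>. continuous_map (top_of_set {0..}) X \<gamma> \<and> \<gamma> 0 = x
                        \<and> (\<forall>t<0. \<gamma> t = undefined)}"

definition lion_strategy :: "'a topology \<Rightarrow> 'a \<Rightarrow> 'a \<Rightarrow> ((real \<Rightarrow> 'a) \<Rightarrow> (real \<Rightarrow> 'a)) \<Rightarrow> bool" where
  "lion_strategy X m l S \<longleftrightarrow>
     (\<forall>\<alpha>\<in>paths_from X m. S \<alpha> \<in> paths_from X l) \<and>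
     (\<forall>\<alpha>\<in>paths_from X m. \<exists>t\<ge>0. S \<alpha> t = \<alpha> t) \<and>
     (\<forall>\<alpha>\<in>paths_from X m. \<forall>\<alpha>'\<in>paths_from X m. \<forall>t\<ge>0.
        (\<forall>s\<in>{0..<t}. \<alpha> s = \<alpha>' s) \<longrightarrow> (\<forall>s\<in>{0..t}. S \<alpha> s = S \<alpha>' s))"

end

theory Submission
  imports Defs
begin

lemma indiscrete_cont:
  assumes "indiscrete_space X" and "\<And>t. t \<ge> 0 \<Longrightarrow> f t \<in> topspace X"
  shows "continuous_map (top_of_set {0::real..}) X f"
  unfolding continuous_map_def
proof (intro conjI allI impI)
  show "f \<in> topspace (top_of_set {0::real..}) \<rightarrow> topspace X" using assms(2) by auto
next
  fix U assume "openin X U"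
  then have "U = {} \<or> U = topspace X" using assms(1) unfolding indiscrete_space_def by blast
  then show "openin (top_of_set {0::real..}) {x \<in> topspace (top_of_set {0..}). f x \<in> U}"
  proof
    assume "U = {}" then show ?thesis by simp
  next
    assume U: "U = topspace X"
    have "{x \<in> topspace (top_of_set {0::real..}). f x \<in> U} = topspace (top_of_set {0::real..})"
      using assms(2) U by auto
    then show ?thesis by (metis openin_topspace)
  qed
qed

theorem mainTheorem3:
  fixes X :: "'a topology" and m l :: 'a
  assumes "indiscrete_space X" and "m \<in> topspace X" and "l \<in> topspace X"
  shows "\<exists>S. lion_strategy X m l S"
proof -
  obtain r :: "(real \<Rightarrow> 'a) rel" where wo: "Well_order r" and fld: "Field r = UNIV"
    using well_ordering[where 'a="real \<Rightarrow> 'a"] by (elim exE conjE)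
  have wr: "wo_rel r" using wo by (simp add: wo_rel_def)
  have wf: "wf (r - Id)" using wr by (rule wo_rel.WF)
  have tot0: "\<forall>a \<in> Field r. \<forall>b \<in> Field r. (a,b) \<in> r \<or> (b,a) \<in> r"
    using wr by (rule wo_rel.TOTALS)
  have tot: "\<And>f g. (f,g) \<in> r \<or> (g,f) \<in> r"
    using tot0 fld by simp
  have refl: "\<And>f. (f,f) \<in> r" using tot by metis
  define least where "least A = (SOME f. f \<in> A \<and> (\<forall>g\<in>A. (f,g) \<in> r))" for A
  have least: "least A \<in> A \<and> (\<forall>g\<in>A. (least A, g) \<in> r)" if "A \<noteq> {}" for A
  proof -
    obtain x where x: "x \<in> A" using \<open>A \<noteq> {}\<close> by auto
    obtain f where f1: "f \<in> A" and f2: "\<And>y. (y,f) \<in> r - Id \<Longrightarrow> y \<notin> A"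
      using wfE_min[OF wf x] by metis
    have "(f,g) \<in> r" if g: "g \<in> A" for g
    proof (cases "g = f")
      case True then show ?thesis using refl by simp
    next
      case False
      have "(g,f) \<notin> r - Id" using f2 g by metis
      then have "(g,f) \<notin> r" using False by simp
      then show ?thesis using tot by metis
    qed
    with f1 have "\<exists>f. f \<in> A \<and> (\<forall>g\<in>A. (f,g) \<in> r)" by blast
    then show ?thesis unfolding least_def by (rule someI_ex)
  qed
  define A where "A \<alpha> t = {f \<in> paths_from X m. \<forall>s\<in>{0..<t}. f s = \<alpha> s}" for \<alpha> :: "real \<Rightarrow> 'a" and t :: real
  define S where "S \<alpha> t = (if t < 0 then undefined else if t = 0 then l else least (A \<alpha> t) t)"
    for \<alpha> :: "real \<Rightarrow> 'a" and t :: real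
  have Ane: "\<alpha> \<in> A \<alpha> t" if "\<alpha> \<in> paths_from X m" for \<alpha> t
    using that unfolding A_def by auto
  have inS: "S \<alpha> \<in> paths_from X l" if a: "\<alpha> \<in> paths_from X m" for \<alpha>
  proof -
    have "S \<alpha> t \<in> topspace X" if "t \<ge> 0" for t
    proof (cases "t = 0")
      case True then show ?thesis using assms(3) by (simp add: S_def)
    next
      case False
      have "least (A \<alpha> t) \<in> A \<alpha> t" using least[of "A \<alpha> t"] Ane[OF a] by auto
      then have p: "least (A \<alpha> t) \<in> paths_from X m" unfolding A_def by simp
      have "t \<in> topspace (top_of_set {0::real..})" using that by simp
      have "least (A \<alpha> t) t \<in> topspace X"
      proof -
        have cm: "continuous_map (top_of_set {0::real..}) X (least (A \<alpha> t))"
          using p unfolding paths_from_def by simp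
        have "least (A \<alpha> t) \<in> topspace (top_of_set {0::real..}) \<rightarrow> topspace X"
          using cm unfolding continuous_map_def by (rule conjunct1)
        then show ?thesis using \<open>t \<in> topspace (top_of_set {0::real..})\<close> by (rule funcset_mem)
      qed
      moreover have "S \<alpha> t = least (A \<alpha> t) t" using False that unfolding S_def by simp
      ultimately show ?thesis by simp
    qed
    then have c: "continuous_map (top_of_set {0::real..}) X (S \<alpha>)"
      by (rule indiscrete_cont[OF assms(1)])
    have "S \<alpha> 0 = l" unfolding S_def by simp
    moreover have "\<forall>t<0. S \<alpha> t = undefined" unfolding S_def by simp
    ultimately show ?thesis unfolding paths_from_def using c by simp
  qed
  have catch: "\<exists>t\<ge>0. S \<alpha> t = \<alpha> t" if a: "\<alpha> \<in> paths_from X m" for \<alpha>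
  proof (rule ccontr)
    assume nc: "\<not> ?thesis"
    define g where "g n = least (A \<alpha> (1 / real (Suc n)))" for n
    have "(g (Suc i), g i) \<in> r - Id" for i
    proof -
      define t where "t = 1 / real (Suc (Suc i))"
      define t' where "t' = 1 / real (Suc i)"
      have tt: "0 < t" "t < t'" unfolding t_def t'_def by (auto simp: frac_less2)
      have g1: "g (Suc i) \<in> A \<alpha> t" "\<forall>h\<in>A \<alpha> t. (g (Suc i), h) \<in> r"
        using least[of "A \<alpha> t"] Ane[OF a] unfolding g_def t_def by auto
      have g2: "g i \<in> A \<alpha> t'"
        using least[of "A \<alpha> t'"] Ane[OF a] unfolding g_def t'_def by auto
      have "A \<alpha> t' \<subseteq> A \<alpha> t" using tt unfolding A_def by auto
      with g1 g2 have r1: "(g (Suc i), g i) \<in> r" by blast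
      have "g i t = \<alpha> t" using g2 tt unfolding A_def by auto
      moreover have "S \<alpha> t = g (Suc i) t" using tt unfolding S_def g_def t_def by simp
      moreover have "S \<alpha> t \<noteq> \<alpha> t" using nc tt by auto
      ultimately have "g (Suc i) \<noteq> g i" by auto
      with r1 show ?thesis by auto
    qed
    then show False using wf unfolding wf_iff_no_infinite_down_chain by blast
  qed
  have nola: "\<forall>s\<in>{0..t}. S \<alpha> s = S \<alpha>' s"
    if "\<forall>s\<in>{0..<t}. \<alpha> s = \<alpha>' s" for \<alpha> \<alpha>' and t :: real
  proof
    fix s assume s: "s \<in> {0..t}"
    have "A \<alpha> s = A \<alpha>' s" using that s unfolding A_def by auto
    then show "S \<alpha> s = S \<alpha>' s" unfolding S_def by simp
  qed
  have "lion_strategy X m l S"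
    unfolding lion_strategy_def using inS catch nola by blast
  then show ?thesis by blast
qed

end
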